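(* Let $K$ be a field of characteristic $p>0$ with $[K:K^p]<\infty$, and let $D$ be a derivation of $K$ of order $p^n$. Then the field extension $K/K^D$ has degree $p^n$, there exists $t\in K$ with $D(t)=1$, and $\mathrm{Im}(D^i)=\ker(D^{p^n-i})$ for every $i=1,\dots,p^n$.
   Context: $K^D=\{x\in K\mid D(x)=0\}$, a subfield of $K$ over which $D$ is linear. A derivation $D$ of $K$ has order $r$ if it is nilpotent of index $r$, i.e. $D^r=0$ and $D^{r-1}\neq0$. *)

theory Defs
  imports "HOL-Algebra.Algebra"
begin

definition ring_char_is :: "('a, 'b) ring_scheme \<Rightarrow> nat \<Rightarrow> bool" where
  "ring_char_is R p \<longleftrightarrow> p > 0 \<and> ([p] \<cdot>\<^bsub>R\<^esub> \<one>\<^bsub>R\<^esub>) = \<zero>\<^bsub>R\<^esub> \<and>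
     (\<forall>m. 0 < m \<and> m < p \<longrightarrow> ([m] \<cdot>\<^bsub>R\<^esub> \<one>\<^bsub>R\<^esub>) \<noteq> \<zero>\<^bsub>R\<^esub>)"

definition derivation :: "('a, 'b) ring_scheme \<Rightarrow> ('a \<Rightarrow> 'a) \<Rightarrow> bool" where
  "derivation R D \<longleftrightarrow>
     (\<forall>x\<in>carrier R. D x \<in> carrier R) \<and>
     (\<forall>x\<in>carrier R. \<forall>y\<in>carrier R. D (x \<oplus>\<^bsub>R\<^esub> y) = D x \<oplus>\<^bsub>R\<^esub> D y) \<and>
     (\<forall>x\<in>carrier R. \<forall>y\<in>carrier R. D (x \<otimes>\<^bsub>R\<^esub> y) = (x \<otimes>\<^bsub>R\<^esub> D y) \<oplus>\<^bsub>R\<^esub> (D x \<otimes>\<^bsub>R\<^esub> y))"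

definition derivation_order :: "('a, 'b) ring_scheme \<Rightarrow> ('a \<Rightarrow> 'a) \<Rightarrow> nat \<Rightarrow> bool" where
  "derivation_order R D r \<longleftrightarrow>
     (\<forall>x\<in>carrier R. (D ^^ r) x = \<zero>\<^bsub>R\<^esub>) \<and> (\<exists>x\<in>carrier R. (D ^^ (r - 1)) x \<noteq> \<zero>\<^bsub>R\<^esub>)"

definition pth_powers :: "('a, 'b) ring_scheme \<Rightarrow> nat \<Rightarrow> 'a set" where
  "pth_powers R p = (\<lambda>x. x [^]\<^bsub>R\<^esub> p) ` carrier R"

definition constants :: "('a, 'b) ring_scheme \<Rightarrow> ('a \<Rightarrow> 'a) \<Rightarrow> 'a set" where
  "constants R D = {x \<in> carrier R. D x = \<zero>\<^bsub>R\<^esub>}"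

end

theory Submission
  imports Defs
begin

locale fder = field R for R (structure) +
  fixes D :: "'a \<Rightarrow> 'a"
  assumes der: "derivation R D"
begin

lemma D_closed: "x \<in> carrier R \<Longrightarrow> D x \<in> carrier R"
  using der unfolding derivation_def by blast

lemma D_add: "x \<in> carrier R \<Longrightarrow> y \<in> carrier R \<Longrightarrow> D (x \<oplus> y) = D x \<oplus> D y"
  using der unfolding derivation_def by blast

lemma D_mult: "x \<in> carrier R \<Longrightarrow> y \<in> carrier R \<Longrightarrow> D (x \<otimes> y) = (x \<otimes> D y) \<oplus> (D x \<otimes> y)"
  using der unfolding derivation_def by blast

lemma D_zero: "D \<zero> = \<zero>"
proof -
  have "D \<zero> = D \<zero> \<oplus> D \<zero>" using D_add[of \<zero> \<zero>] by simp
  moreover have "D \<zero> \<in> carrier R" using D_closed by simp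
  ultimately show ?thesis by (metis add.l_cancel_one' zero_closed)
qed

lemma D_one: "D \<one> = \<zero>"
proof -
  have "D \<one> = D \<one> \<oplus> D \<one>" using D_mult[of \<one> \<one>] D_closed[of \<one>] by simp
  moreover have "D \<one> \<in> carrier R" using D_closed by simp
  ultimately show ?thesis by (metis add.l_cancel_one' zero_closed)
qed

lemma D_minus: "x \<in> carrier R \<Longrightarrow> D (\<ominus> x) = \<ominus> D x"
proof -
  assume x: "x \<in> carrier R"
  have "D x \<oplus> D (\<ominus> x) = \<zero>" using D_add[of x "\<ominus> x"] x D_zero by (simp add: r_neg)
  thus ?thesis using x D_closed by (metis a_inv_closed add.inv_equality add.m_comm minus_equality)
qed

lemma D_diff: "x \<in> carrier R \<Longrightarrow> y \<in> carrier R \<Longrightarrow> D (x \<ominus> y) = D x \<ominus> D y"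
  by (simp add: a_minus_def D_add D_minus)

lemma D_smult: "c \<in> carrier R \<Longrightarrow> D c = \<zero> \<Longrightarrow> y \<in> carrier R \<Longrightarrow> D (c \<otimes> y) = c \<otimes> D y"
  using D_mult D_closed by simp

lemma Dn_closed: "x \<in> carrier R \<Longrightarrow> (D ^^ m) x \<in> carrier R"
  by (induction m) (auto simp: D_closed)

lemma Dn_zero: "(D ^^ m) \<zero> = \<zero>"
  by (induction m) (auto simp: D_zero)

lemma Dn_diff: "x \<in> carrier R \<Longrightarrow> y \<in> carrier R \<Longrightarrow> (D ^^ m) (x \<ominus> y) = (D ^^ m) x \<ominus> (D ^^ m) y"
  by (induction m) (auto simp: D_diff Dn_closed)

lemma Dn_add: "x \<in> carrier R \<Longrightarrow> y \<in> carrier R \<Longrightarrow> (D ^^ m) (x \<oplus> y) = (D ^^ m) x \<oplus> (D ^^ m) y"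
  by (induction m) (auto simp: D_add Dn_closed)

lemma Dn_smult: "c \<in> carrier R \<Longrightarrow> D c = \<zero> \<Longrightarrow> y \<in> carrier R \<Longrightarrow> (D ^^ m) (c \<otimes> y) = c \<otimes> (D ^^ m) y"
  by (induction m) (auto simp: D_smult Dn_closed)

lemma Dn_comp: "(D ^^ m) ((D ^^ n) z) = (D ^^ (m + n)) z"
  by (simp add: funpow_add)

lemma D_inv: assumes "c \<in> carrier R" "c \<noteq> \<zero>" "D c = \<zero>" shows "D (inv c) = \<zero>"
proof -
  have u: "c \<in> Units R" using assms field_Units by auto
  have ic: "inv c \<in> carrier R" using u by simp
  have "\<zero> = D (c \<otimes> inv c)" using u D_one by simp
  also have "\<dots> = c \<otimes> D (inv c)" using D_mult[OF assms(1) ic] assms D_closed[OF ic] ic by simp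
  finally have "c \<otimes> D (inv c) = \<zero>" by simp
  thus ?thesis using assms D_closed[OF ic] integral by blast
qed

context
  fixes N :: nat and x :: 'a
  assumes nil: "\<And>y. y \<in> carrier R \<Longrightarrow> (D ^^ N) y = \<zero>"
    and xc: "x \<in> carrier R" and xn: "(D ^^ (N - 1)) x \<noteq> \<zero>"
begin

definition "KK = {c \<in> carrier R. D c = \<zero>}"
definition "U j = map (\<lambda>i. (D ^^ i) x) [j..<N]"

lemma N_pos: "N \<ge> 1"
  using nil[OF xc] xn by (cases N) auto

lemma b_props: "(D ^^ (N - 1)) x \<in> carrier R" "D ((D ^^ (N - 1)) x) = \<zero>"
proof -
  show "(D ^^ (N - 1)) x \<in> carrier R" using Dn_closed xc by simp
  have "D ((D ^^ (N - 1)) x) = (D ^^ Suc (N - 1)) x" by simp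
  also have "\<dots> = \<zero>" using N_pos nil xc by simp
  finally show "D ((D ^^ (N - 1)) x) = \<zero>" .
qed

lemma U_set: "set (U j) \<subseteq> carrier R"
  unfolding U_def using Dn_closed xc by auto

lemma U_cons: "j < N \<Longrightarrow> U j = (D ^^ j) x # U (Suc j)"
  unfolding U_def by (simp add: upt_conv_Cons)

lemma U_N: "U N = []" unfolding U_def by simp

lemma key:
  assumes k: "Suc k \<le> N" and y: "y \<in> carrier R" and yk: "(D ^^ Suc k) y = \<zero>"
  defines "c \<equiv> (D ^^ k) y \<otimes> inv ((D ^^ (N - 1)) x)"
  shows "c \<in> KK" "(D ^^ k) (y \<ominus> c \<otimes> (D ^^ (N - Suc k)) x) = \<zero>"
proof -
  let ?b = "(D ^^ (N - 1)) x" and ?a = "(D ^^ k) y"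
  have b: "?b \<in> carrier R" "D ?b = \<zero>" using b_props by auto
  have a: "?a \<in> carrier R" "D ?a = \<zero>" using Dn_closed y yk by auto
  have bu: "?b \<in> Units R" using b xn field_Units by auto
  have ib: "inv ?b \<in> carrier R" "D (inv ?b) = \<zero>" using bu D_inv b xn by auto
  have cc: "c \<in> carrier R" unfolding c_def using a ib by simp
  have "D c = \<zero>" unfolding c_def using D_mult[OF a(1) ib(1)] a ib by simp
  thus "c \<in> KK" using cc unfolding KK_def by simp
  have "(D ^^ k) (c \<otimes> (D ^^ (N - Suc k)) x) = c \<otimes> (D ^^ (k + (N - Suc k))) x"
    using Dn_smult[OF cc \<open>D c = \<zero>\<close>] Dn_closed xc Dn_comp by simp
  also have "k + (N - Suc k) = N - 1" using k by simp
  also have "c \<otimes> ?b = ?a" unfolding c_def using a ib bu b by (simp add: m_assoc)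
  finally have e: "(D ^^ k) (c \<otimes> (D ^^ (N - Suc k)) x) = ?a" .
  show "(D ^^ k) (y \<ominus> c \<otimes> (D ^^ (N - Suc k)) x) = \<zero>"
    using Dn_diff[OF y, of "c \<otimes> (D ^^ (N - Suc k)) x" k] e cc Dn_closed xc a
    by (simp add: r_neg a_minus_def)
qed

lemma span: "k \<le> N \<Longrightarrow> Span KK (U (N - k)) = {y \<in> carrier R. (D ^^ k) y = \<zero>}"
proof (induction k)
  case 0
  then show ?case using U_N by auto
next
  case (Suc k)
  let ?j = "N - Suc k"
  have j: "?j < N" "Suc ?j = N - k" using Suc.prems by auto
  have IH: "Span KK (U (Suc ?j)) = {y \<in> carrier R. (D ^^ k) y = \<zero>}"
    using Suc j by simp
  have sp: "Span KK (U ?j) = line_extension KK ((D ^^ ?j) x) (Span KK (U (Suc ?j)))"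
    using U_cons[OF j(1)] by simp
  show ?case
  proof
    show "Span KK (U ?j) \<subseteq> {y \<in> carrier R. (D ^^ Suc k) y = \<zero>}"
    proof
      fix y assume "y \<in> Span KK (U ?j)"
      then obtain c v where c: "c \<in> KK" and v: "v \<in> carrier R" "(D ^^ k) v = \<zero>"
        and yv: "y = c \<otimes> (D ^^ ?j) x \<oplus> v"
        unfolding sp line_extension_mem_iff IH by blast
      have cc: "c \<in> carrier R" "D c = \<zero>" using c unfolding KK_def by auto
      have dj: "(D ^^ ?j) x \<in> carrier R" using Dn_closed xc by simp
      have "(D ^^ Suc k) (c \<otimes> (D ^^ ?j) x) = c \<otimes> (D ^^ Suc k) ((D ^^ ?j) x)"
        by (rule Dn_smult[OF cc dj])
      also have "\<dots> = c \<otimes> (D ^^ (Suc k + ?j)) x" by (simp only: Dn_comp)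
      also have "Suc k + ?j = N" using Suc.prems by simp
      finally have "(D ^^ Suc k) (c \<otimes> (D ^^ ?j) x) = \<zero>" using nil xc cc by simp
      moreover have "(D ^^ Suc k) v = \<zero>" using v D_zero by simp
      ultimately show "y \<in> {y \<in> carrier R. (D ^^ Suc k) y = \<zero>}"
        using yv Dn_add[of "c \<otimes> (D ^^ ?j) x" v "Suc k"] cc dj v by simp
    qed
  next
    show "{y \<in> carrier R. (D ^^ Suc k) y = \<zero>} \<subseteq> Span KK (U ?j)"
    proof
      fix y assume y: "y \<in> {y \<in> carrier R. (D ^^ Suc k) y = \<zero>}"
      define c where "c = (D ^^ k) y \<otimes> inv ((D ^^ (N - 1)) x)"
      have c: "c \<in> KK" "(D ^^ k) (y \<ominus> c \<otimes> (D ^^ ?j) x) = \<zero>"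
        using key[OF Suc.prems, of y] y unfolding c_def by auto
      have cc: "c \<in> carrier R" using c unfolding KK_def by auto
      have dj: "(D ^^ ?j) x \<in> carrier R" using Dn_closed xc by simp
      have "y = c \<otimes> (D ^^ ?j) x \<oplus> (y \<ominus> c \<otimes> (D ^^ ?j) x)"
        using y cc dj by (simp add: a_minus_def add.m_lcomm r_neg)
      moreover have "y \<ominus> c \<otimes> (D ^^ ?j) x \<in> Span KK (U (Suc ?j))"
        unfolding IH using c y cc dj by simp
      ultimately show "y \<in> Span KK (U ?j)"
        unfolding sp line_extension_mem_iff using c(1) by blast
    qed
  qed
qed

lemma indep: "k \<le> N \<Longrightarrow> independent KK (U (N - k))"
proof (induction k)
  case 0
  then show ?case using U_N by auto
next
  case (Suc k)
  let ?j = "N - Suc k"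
  have j: "?j < N" "Suc ?j = N - k" using Suc.prems by auto
  have "(D ^^ k) ((D ^^ ?j) x) = (D ^^ (k + ?j)) x" by (simp only: Dn_comp)
  also have "k + ?j = N - 1" using Suc.prems by simp
  finally have e: "(D ^^ k) ((D ^^ ?j) x) = (D ^^ (N - 1)) x" .
  hence "(D ^^ ?j) x \<notin> Span KK (U (Suc ?j))"
    using span[of k] Suc.prems xn j e by simp
  moreover have "independent KK (U (Suc ?j))" using Suc j by simp
  ultimately show ?case unfolding U_cons[OF j(1)] using Dn_closed xc
    by (intro li_Cons) auto
qed

lemma img: "k \<le> N \<Longrightarrow> {y \<in> carrier R. (D ^^ k) y = \<zero>} \<subseteq> (D ^^ (N - k)) ` carrier R"
proof (induction k)
  case 0
  have "(D ^^ N) \<zero> = \<zero>" by (rule Dn_zero)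
  then show ?case by (auto intro!: image_eqI[where x="\<zero>"])
next
  case (Suc k)
  let ?j = "N - Suc k"
  have j: "?j < N" "Suc ?j = N - k" using Suc.prems by auto
  show ?case
  proof
    fix y assume y: "y \<in> {y \<in> carrier R. (D ^^ Suc k) y = \<zero>}"
    define c where "c = (D ^^ k) y \<otimes> inv ((D ^^ (N - 1)) x)"
    have c: "c \<in> KK" "(D ^^ k) (y \<ominus> c \<otimes> (D ^^ ?j) x) = \<zero>"
      using key[OF Suc.prems, of y] y unfolding c_def by auto
    have cc: "c \<in> carrier R" "D c = \<zero>" using c unfolding KK_def by auto
    have dj: "(D ^^ ?j) x \<in> carrier R" using Dn_closed xc by simp
    have "y \<ominus> c \<otimes> (D ^^ ?j) x \<in> (D ^^ Suc ?j) ` carrier R"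
      using Suc j c y cc dj by auto
    then obtain z where z: "z \<in> carrier R" "y \<ominus> c \<otimes> (D ^^ ?j) x = (D ^^ Suc ?j) z" by blast
    have Dz: "(D ^^ Suc ?j) z = (D ^^ ?j) (D z)" by (simp only: funpow_Suc_right comp_def)
    have "y = c \<otimes> (D ^^ ?j) x \<oplus> (y \<ominus> c \<otimes> (D ^^ ?j) x)"
      using y cc dj by (simp add: a_minus_def add.m_lcomm r_neg)
    also have "\<dots> = (D ^^ ?j) (c \<otimes> x \<oplus> D z)"
      using z Dz Dn_add Dn_smult[OF cc xc] cc xc D_closed by simp
    finally show "y \<in> (D ^^ ?j) ` carrier R" using cc xc z D_closed by blast
  qed
qed


lemma KK_eq: "KK = constants R D" unfolding KK_def constants_def by simp

lemma dim_main: "dimension N (constants R D) (carrier R)"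
proof -
  have ker_all: "{y \<in> carrier R. (D ^^ N) y = \<zero>} = carrier R" using nil by auto
  have "dimension (length (U 0)) KK (Span KK (U 0))"
    using indep[of N] by (intro dimension_independent) simp
  moreover have "length (U 0) = N" unfolding U_def by simp
  moreover have "Span KK (U 0) = carrier R"
    using span[of N] ker_all by simp
  ultimately show ?thesis using KK_eq by simp
qed

lemma imgeq: "i \<in> {1..N} \<Longrightarrow> (D ^^ i) ` carrier R = {y \<in> carrier R. (D ^^ (N - i)) y = \<zero>}"
proof
  assume i: "i \<in> {1..N}"
  show "(D ^^ i) ` carrier R \<subseteq> {y \<in> carrier R. (D ^^ (N - i)) y = \<zero>}"
  proof
    fix y assume "y \<in> (D ^^ i) ` carrier R"
    then obtain z where z: "z \<in> carrier R" "y = (D ^^ i) z" by blast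
    have "(D ^^ (N - i)) y = (D ^^ (N - i + i)) z" using z by (simp only: Dn_comp)
    also have "N - i + i = N" using i by simp
    finally show "y \<in> {y \<in> carrier R. (D ^^ (N - i)) y = \<zero>}"
      using z nil Dn_closed by simp
  qed
  show "{y \<in> carrier R. (D ^^ (N - i)) y = \<zero>} \<subseteq> (D ^^ i) ` carrier R"
    using img[of "N - i"] i by simp
qed

lemma t_main: assumes N2: "N \<ge> 2" shows "\<exists>t\<in>carrier R. D t = \<one>"
proof -
  have "\<one> \<in> (D ^^ (N - 1)) ` carrier R"
    using imgeq[of "N - 1"] N2 D_one by simp
  then obtain z where z: "z \<in> carrier R" "\<one> = (D ^^ (N - 1)) z" by blast
  have e: "N - 1 = Suc (N - 2)" using N2 by simp
  have "(D ^^ (N - 1)) z = (D ^^ Suc (N - 2)) z" by (simp only: e)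
  also have "\<dots> = D ((D ^^ (N - 2)) z)" by simp
  finally have "(D ^^ (N - 1)) z = D ((D ^^ (N - 2)) z)" .
  thus ?thesis using z Dn_closed by metis
qed

end

end


theorem lemma4p3:
  fixes R :: "('a, 'b) ring_scheme" and D :: "'a \<Rightarrow> 'a" and p n :: nat
  assumes "field R"
    and "ring_char_is R p"
    and "ring.finite_dimension R (pth_powers R p) (carrier R)"
    and "derivation R D"
    and "n \<ge> 1"
    and "derivation_order R D (p ^ n)"
  shows "ring.dimension R (p ^ n) (constants R D) (carrier R)
     \<and> (\<exists>t\<in>carrier R. D t = \<one>\<^bsub>R\<^esub>)
     \<and> (\<forall>i\<in>{1..p ^ n}. (D ^^ i) ` carrier R = {x \<in> carrier R. (D ^^ (p ^ n - i)) x = \<zero>\<^bsub>R\<^esub>})"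
proof -
  interpret fder R D using assms(1,4) by (intro fder.intro fder_axioms.intro)
  define N where "N = p ^ n"
  have p1: "p \<noteq> 1"
  proof
    assume "p = 1"
    hence "\<one>\<^bsub>R\<^esub> = \<zero>\<^bsub>R\<^esub>" using assms(2) unfolding ring_char_is_def by simp
    thus False by simp
  qed
  have p2: "p \<ge> 2" using p1 assms(2) unfolding ring_char_is_def by simp
  have "p ^ 1 \<le> p ^ n" using p2 assms(5) by (intro power_increasing) auto
  hence N2: "N \<ge> 2" unfolding N_def using p2 by simp
  have nil: "\<And>y. y \<in> carrier R \<Longrightarrow> (D ^^ N) y = \<zero>\<^bsub>R\<^esub>"
    using assms(6) unfolding derivation_order_def N_def by blast
  obtain x where xc: "x \<in> carrier R" and xn: "(D ^^ (N - 1)) x \<noteq> \<zero>\<^bsub>R\<^esub>"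
    using assms(6) unfolding derivation_order_def N_def by blast
  show ?thesis
    using dim_main[OF nil xc xn] t_main[OF nil xc xn N2] imgeq[OF nil xc xn]
    unfolding N_def by blast
qed

end
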